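(* Let $S_0\subset\Delta$, $w\in W$ with $wS_0\subset R_+$, and $S=wS_0$. If $\beta\in\Delta$ and $\beta\notin S$, then $\beta$ is not a linear combination (with complex coefficients) of the elements of $S$.
   Context: $R$ is an irreducible reduced root system in $V=\mathbb C^n$ with Weyl group $W$, positive roots $R_+$ and set of simple roots $\Delta$. *)

theory Defs
  imports "HOL-Analysis.Analysis"
begin

text \<open>Root systems in V = complex^'n, following Bourbaki (no inner product needed):
  a reflection for a root a is a map x \<mapsto> x - f(x) a with f a C-linear functional
  (the coroot) with f(a) = 2, preserving R, and f(b) integral for all roots b.\<close>

definition root_reflection ::
  "(complex ^ 'n) set \<Rightarrow> complex ^ 'n \<Rightarrow> (complex ^ 'n \<Rightarrow> complex ^ 'n) \<Rightarrow> bool" where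
  "root_reflection R a s \<longleftrightarrow>
     (\<exists>f :: complex ^ 'n \<Rightarrow> complex.
        Vector_Spaces.linear (*s) (*) f \<and> f a = 2 \<and>
        s = (\<lambda>x. x - f x *s a) \<and> s ` R = R \<and> (\<forall>b\<in>R. f b \<in> \<int>))"

definition root_system :: "(complex ^ 'n) set \<Rightarrow> bool" where
  "root_system R \<longleftrightarrow> finite R \<and> 0 \<notin> R \<and> vec.span R = UNIV \<and>
     (\<forall>a\<in>R. \<exists>s. root_reflection R a s)"

definition reduced_root_system :: "(complex ^ 'n) set \<Rightarrow> bool" where
  "reduced_root_system R \<longleftrightarrow> root_system R \<and>
     (\<forall>a\<in>R. \<forall>c::complex. c *s a \<in> R \<longrightarrow> c = 1 \<or> c = -1)"

text \<open>Irreducible: R is not the union of two nonempty disjoint subsets that are mutually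
  orthogonal, i.e. whose reflections fix each other's roots.\<close>
definition irreducible_root_system :: "(complex ^ 'n) set \<Rightarrow> bool" where
  "irreducible_root_system R \<longleftrightarrow> root_system R \<and>
     \<not> (\<exists>R1 R2. R1 \<noteq> {} \<and> R2 \<noteq> {} \<and> R1 \<inter> R2 = {} \<and> R = R1 \<union> R2 \<and>
          (\<forall>a\<in>R1. \<forall>b\<in>R2. \<forall>s. root_reflection R a s \<longrightarrow> s b = b))"

text \<open>A base (set of simple roots): a linearly independent subset of R such that every
  root is an integer combination of it with all coefficients \<ge> 0 or all \<le> 0.\<close>
definition root_base :: "(complex ^ 'n) set \<Rightarrow> (complex ^ 'n) set \<Rightarrow> bool" where
  "root_base R D \<longleftrightarrow> D \<subseteq> R \<and> vec.independent D \<and>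
     (\<forall>b\<in>R. \<exists>k :: complex ^ 'n \<Rightarrow> int.
        b = (\<Sum>d\<in>D. of_int (k d) *s d) \<and> ((\<forall>d\<in>D. k d \<ge> 0) \<or> (\<forall>d\<in>D. k d \<le> 0)))"

definition positive_roots :: "(complex ^ 'n) set \<Rightarrow> (complex ^ 'n) set \<Rightarrow> (complex ^ 'n) set" where
  "positive_roots R D = {b\<in>R. \<exists>k :: complex ^ 'n \<Rightarrow> int.
        b = (\<Sum>d\<in>D. of_int (k d) *s d) \<and> (\<forall>d\<in>D. k d \<ge> 0)}"

text \<open>Weyl group: generated by the root reflections.\<close>
inductive_set weyl_group :: "(complex ^ 'n) set \<Rightarrow> (complex ^ 'n \<Rightarrow> complex ^ 'n) set"
  for R where
  weyl_id: "id \<in> weyl_group R"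
| weyl_step: "w \<in> weyl_group R \<Longrightarrow> a \<in> R \<Longrightarrow> root_reflection R a s \<Longrightarrow> s \<circ> w \<in> weyl_group R"

end

theory Submission
  imports Defs
begin

definition goodmap :: "(complex ^ 'n) set \<Rightarrow> (complex ^ 'n \<Rightarrow> complex ^ 'n) \<Rightarrow> bool" where
  "goodmap R w \<longleftrightarrow> (\<forall>x y. w (x + y) = w x + w y) \<and> (\<forall>c x. w (c *s x) = c *s w x)
     \<and> w ` R = R \<and> inj w"

lemma goodmap_sum:
  assumes "goodmap R w" shows "w (\<Sum>a\<in>A. g a) = (\<Sum>a\<in>A. w (g a))"
proof -
  have add: "\<And>x y. w (x + y) = w x + w y" using assms by (simp add: goodmap_def)
  have z: "w 0 = 0"
  proof -
    have "w (0 + 0) = w 0 + w 0" by (rule add)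
    then show ?thesis by simp
  qed
  show ?thesis
  proof (cases "finite A")
    case True then show ?thesis by induction (simp_all add: z add)
  next
    case False then show ?thesis by (simp add: z)
  qed
qed

lemma reflection_good:
  assumes "root_reflection R a s" shows "goodmap R s"
proof -
  obtain f where lf: "Vector_Spaces.linear (*s) (*) f" and fa: "f a = 2"
    and s: "s = (\<lambda>x. x - f x *s a)" and sR: "s ` R = R"
    using assms unfolding root_reflection_def by blast
  have fadd: "\<And>x y. f (x + y) = f x + f y" and fsc: "\<And>c x. f (c *s x) = c * f x"
    using lf by (simp_all add: Vector_Spaces.linear_iff)
  have ss: "s (s x) = x" for x
  proof -
    have "f (s x) = - f x" unfolding s using fadd[of x "- (f x *s a)"] fsc[of "- f x" a] fa
      by (simp add: fsc)
    then show ?thesis unfolding s by (simp add: s algebra_simps vec.scale_left_diff_distrib)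
  qed
  have inj: "inj s" by (metis injI ss)
  have "(\<forall>x y. s (x + y) = s x + s y) \<and> (\<forall>c x. s (c *s x) = c *s s x)"
    by (auto simp: s fadd fsc algebra_simps vec.scale_left_distrib vec.scale_scale)
  then show ?thesis unfolding goodmap_def using sR inj by blast
qed

lemma weyl_good:
  assumes "w \<in> weyl_group R" shows "goodmap R w"
  using assms
proof induction
  case weyl_id then show ?case by (simp add: goodmap_def)
next
  case (weyl_step w a s)
  have "goodmap R s" by (rule reflection_good) fact
  with weyl_step.IH show ?case unfolding goodmap_def
    by (simp add: inj_compose) (metis image_image)
qed

lemma indep_coeff:
  assumes ind: "vec.independent D" and fin: "finite D"
    and eq: "(\<Sum>d\<in>D. a d *s d) = (\<Sum>d\<in>D. b d *s d)" and dD: "d \<in> D"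
  shows "a d = b d"
proof (rule ccontr)
  assume ne: "a d \<noteq> b d"
  have "(\<Sum>d\<in>D. (a d - b d) *s d) = (\<Sum>d\<in>D. a d *s d) - (\<Sum>d\<in>D. b d *s d)"
    by (simp add: vec.scale_left_diff_distrib sum_subtractf)
  also have "\<dots> = 0" using eq by simp
  finally have "vec.dependent D" using ne dD fin
    by (subst vec.dependent_finite) (auto intro!: exI[of _ "\<lambda>d. a d - b d"])
  with ind show False by simp
qed

lemma delta_sum:
  fixes \<beta> :: "complex ^ 'n"
  assumes "finite D" "\<beta> \<in> D"
  shows "(\<Sum>d\<in>D. (if d = \<beta> then 1 else 0) *s d) = \<beta>"
proof -
  have "(\<Sum>d\<in>D. (if d = \<beta> then 1 else 0) *s d) = (\<Sum>d\<in>D. if d = \<beta> then d else 0)"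
    by (rule sum.cong) (auto simp: vector_smult_lid vector_smult_lzero)
  also have "\<dots> = \<beta>" using assms by simp
  finally show ?thesis .
qed

theorem mainTheorem3:
  fixes R D S0 :: "(complex ^ 'n) set"
    and w :: "complex ^ 'n \<Rightarrow> complex ^ 'n"
    and \<beta> :: "complex ^ 'n"
  assumes "irreducible_root_system R"
    and "reduced_root_system R"
    and "root_base R D"
    and "S0 \<subseteq> D"
    and "w \<in> weyl_group R"
    and "w ` S0 \<subseteq> positive_roots R D"
    and "\<beta> \<in> D"
    and "\<beta> \<notin> w ` S0"
  shows "\<beta> \<notin> vec.span (w ` S0)"
proof
  assume bspan: "\<beta> \<in> vec.span (w ` S0)"
  have rs: "root_system R" using assms(1) by (simp add: irreducible_root_system_def)
  then have finR: "finite R" and R0: "0 \<notin> R" by (auto simp: root_system_def)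
  have DR: "D \<subseteq> R" and ind: "vec.independent D"
    and repr: "\<forall>b\<in>R. \<exists>k :: complex ^ 'n \<Rightarrow> int.
        b = (\<Sum>d\<in>D. of_int (k d) *s d) \<and> ((\<forall>d\<in>D. k d \<ge> 0) \<or> (\<forall>d\<in>D. k d \<le> 0))"
    using assms(3) by (auto simp: root_base_def)
  have finD: "finite D" using DR finR finite_subset by blast
  have finS0: "finite S0" using assms(4) finD finite_subset by blast
  have g: "goodmap R w" by (rule weyl_good) fact
  have wadd: "\<And>x y. w (x + y) = w x + w y" and wsc: "\<And>c x. w (c *s x) = c *s w x"
    and wR: "w ` R = R" and winj: "inj w" using g by (auto simp: goodmap_def)
  obtain c where c: "\<beta> = (\<Sum>y\<in>w ` S0. c y *s y)"
    using bspan finS0 by (auto simp: vec.span_finite)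
  also have "\<dots> = (\<Sum>e\<in>S0. c (w e) *s w e)"
    using winj by (subst sum.reindex) (auto intro: inj_on_subset)
  finally have b1: "\<beta> = (\<Sum>e\<in>S0. c (w e) *s w e)" .
  define x where "x = (\<Sum>e\<in>S0. c (w e) *s e)"
  have wx: "w x = \<beta>" unfolding x_def b1 by (simp only: goodmap_sum[OF g] wsc)
  have "\<beta> \<in> R" using DR assms(7) by blast
  then obtain r where r: "r \<in> R" "\<beta> = w r" using wR by (metis imageE)
  have xR: "x \<in> R" using wx r winj by (metis injD)
  obtain k :: "complex ^ 'n \<Rightarrow> int" where kx: "x = (\<Sum>d\<in>D. of_int (k d) *s d)"
    and ksign: "(\<forall>d\<in>D. k d \<ge> 0) \<or> (\<forall>d\<in>D. k d \<le> 0)"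
    using repr xR by blast
  have x2: "x = (\<Sum>d\<in>D. (if d \<in> S0 then c (w d) else 0) *s d)"
    unfolding x_def
    by (rule sum.mono_neutral_cong_right[symmetric]) (use finD assms(4) in auto)
  have k0: "\<forall>d\<in>D - S0. k d = 0"
  proof
    fix d assume d: "d \<in> D - S0"
    have "of_int (k d) = (if d \<in> S0 then c (w d) else 0)"
      using indep_coeff[OF ind finD, of "\<lambda>d. of_int (k d)" "\<lambda>d. if d \<in> S0 then c (w d) else 0" d]
        kx x2 d by auto
    then show "k d = 0" using d by simp
  qed
  have "\<beta> = (\<Sum>d\<in>D. of_int (k d) *s w d)"
    unfolding wx[symmetric] kx by (simp only: goodmap_sum[OF g] wsc)
  also have "\<dots> = (\<Sum>e\<in>S0. of_int (k e) *s w e)"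
    by (rule sum.mono_neutral_cong_left[symmetric]) (use finD assms(4) k0 in auto)
  finally have b2: "\<beta> = (\<Sum>e\<in>S0. of_int (k e) *s w e)" .
  have "\<forall>e\<in>S0. \<exists>m :: complex ^ 'n \<Rightarrow> int. w e = (\<Sum>d\<in>D. of_int (m d) *s d) \<and> (\<forall>d\<in>D. m d \<ge> 0)"
    using assms(6) by (auto simp: positive_roots_def)
  then obtain m :: "complex ^ 'n \<Rightarrow> complex ^ 'n \<Rightarrow> int" where
    mrep: "\<And>e. e \<in> S0 \<Longrightarrow> w e = (\<Sum>d\<in>D. of_int (m e d) *s d)"
    and mpos: "\<And>e d. e \<in> S0 \<Longrightarrow> d \<in> D \<Longrightarrow> m e d \<ge> 0"
    by metis
  have "\<beta> = (\<Sum>e\<in>S0. of_int (k e) *s (\<Sum>d\<in>D. of_int (m e d) *s d))"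
    unfolding b2 by (rule sum.cong) (auto simp: mrep)
  also have "\<dots> = (\<Sum>e\<in>S0. \<Sum>d\<in>D. (of_int (k e * m e d) :: complex) *s d)"
    by (simp add: vec.scale_sum_right vec.scale_scale)
  also have "\<dots> = (\<Sum>d\<in>D. \<Sum>e\<in>S0. (of_int (k e * m e d) :: complex) *s d)"
    by (rule sum.swap)
  also have "\<dots> = (\<Sum>d\<in>D. (of_int (\<Sum>e\<in>S0. k e * m e d) :: complex) *s d)"
    by (simp add: vec.scale_sum_left)
  finally have b3: "\<beta> = (\<Sum>d\<in>D. (of_int (\<Sum>e\<in>S0. k e * m e d) :: complex) *s d)" .
  have coef: "(\<Sum>e\<in>S0. k e * m e d) = (if d = \<beta> then 1 else 0)" if d: "d \<in> D" for d
  proof -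
    have "(\<Sum>d\<in>D. (of_int (\<Sum>e\<in>S0. k e * m e d) :: complex) *s d)
        = (\<Sum>d\<in>D. (of_int (if d = \<beta> then 1 else 0) :: complex) *s d)"
    proof -
      have "(\<Sum>d\<in>D. (of_int (if d = \<beta> then 1 else 0) :: complex) *s d)
          = (\<Sum>d\<in>D. (if d = \<beta> then 1 else 0) *s d)" by (rule sum.cong) auto
      also have "\<dots> = \<beta>" by (rule delta_sum[OF finD assms(7)])
      finally show ?thesis by (rule trans[OF b3[symmetric] sym])
    qed
    from indep_coeff[OF ind finD this d] show ?thesis by (simp only: of_int_eq_iff)
  qed
  have mnz: "\<exists>d\<in>D. m e d > 0" if e: "e \<in> S0" for e
  proof (rule ccontr)
    assume "\<not> ?thesis"
    then have "\<forall>d\<in>D. m e d = 0" using mpos[OF e] by force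
    then have "w e = 0" using mrep[OF e] by simp
    moreover have "w e \<in> R" using assms(6) e by (auto simp: positive_roots_def)
    ultimately show False using R0 by simp
  qed
  have cb: "(\<Sum>e\<in>S0. k e * m e \<beta>) = 1" using coef assms(7) by simp
  have kpos: "\<forall>d\<in>D. k d \<ge> 0"
  proof (rule ccontr)
    assume "\<not> ?thesis"
    with ksign have kn: "\<forall>d\<in>D. k d \<le> 0" by blast
    have "(\<Sum>e\<in>S0. k e * m e \<beta>) \<le> 0"
      using kn mpos assms(4,7) by (intro sum_nonpos) (simp add: mult_nonpos_nonneg subset_iff)
    with cb show False by simp
  qed
  obtain e0 where e0: "e0 \<in> S0" "k e0 > 0"
  proof (rule ccontr)
    assume "\<not> thesis"
    then have "\<forall>e\<in>S0. k e = 0" using kpos assms(4) that by force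
    then have "(\<Sum>e\<in>S0. k e * m e \<beta>) = 0" by simp
    with cb show False by simp
  qed
  have le: "k e0 * m e0 d \<le> (if d = \<beta> then 1 else 0)" if d: "d \<in> D" for d
  proof -
    have "k e0 * m e0 d \<le> (\<Sum>e\<in>S0. k e * m e d)"
      using finS0 e0(1) kpos mpos d assms(4)
      by (intro member_le_sum) (auto simp: subset_iff)
    then show ?thesis using coef[OF d] by simp
  qed
  have mdelta: "m e0 d = (if d = \<beta> then 1 else 0)" if d: "d \<in> D" for d
  proof (cases "d = \<beta>")
    case False
    then have "k e0 * m e0 d \<le> 0" using le[OF d] by simp
    with e0(2) mpos[OF e0(1) d] have "m e0 d = 0"
      by (metis antisym mult_pos_pos not_le order_le_less)
    then show ?thesis using False by simp
  next
    case True
    obtain d' where d': "d' \<in> D" "m e0 d' > 0" using mnz[OF e0(1)] by blast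
    have "d' = \<beta>"
    proof (rule ccontr)
      assume "d' \<noteq> \<beta>"
      then have "k e0 * m e0 d' \<le> 0" using le[OF d'(1)] by simp
      with e0(2) d'(2) show False by (simp add: mult_le_0_iff)
    qed
    then have "k e0 * m e0 \<beta> \<le> 1" "m e0 \<beta> > 0" using le[OF assms(7)] d' by auto
    moreover have "1 * m e0 \<beta> \<le> k e0 * m e0 \<beta>"
      by (rule mult_right_mono) (use e0(2) mpos[OF e0(1) assms(7)] in auto)
    ultimately have "m e0 \<beta> = 1" by linarith
    then show ?thesis using True by simp
  qed
  have "w e0 = (\<Sum>d\<in>D. of_int (m e0 d) *s d)" by (rule mrep[OF e0(1)])
  also have "\<dots> = (\<Sum>d\<in>D. (if d = \<beta> then 1 else 0) *s d)"
    by (rule sum.cong) (auto simp: mdelta)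
  also have "\<dots> = \<beta>" by (rule delta_sum[OF finD assms(7)])
  finally have "\<beta> \<in> w ` S0" using e0(1) by (metis image_eqI)
  with assms(8) show False by simp
qed

end
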